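(* Let $\Omega=[0,1]$, let $p_1,\dots,p_n\in(0,1)$ be distinct, and let $F_\infty$ be the pointwise minimal $\Omega$-tropical series that is non-smooth at each of $p_1,\dots,p_n$. Let $q\in[0,1)$ be the fractional part of $-\sum_{j=1}^n p_j$. Let $H_\infty$ be the set of non-smooth points of $F_\infty$ and $\mu_\infty$ their multiplicities. Then: (i) if $q=0$, then $H_\infty=\{p_1,\dots,p_n\}$ and all multiplicities equal $1$; (ii) if $q=p_j$ for some $j\in\{1,\dots,n\}$, then $H_\infty=\{p_1,\dots,p_n\}$, $\mu_\infty(p_j)=2$, and all other multiplicities equal $1$; (iii) otherwise, $H_\infty=\{q,p_1,\dots,p_n\}$ and all multiplicities equal $1$.
   Context: Let $\Omega=[\alpha,\beta]$ be a compact interval. An $\Omega$-tropical series is a function $F:\Omega\to[0,\infty)$ with $F(\alpha)=F(\beta)=0$ that can be written as $F(z)=\inf_{v\in\mathbb{Z}}(a_v+zv)$ for some real numbers $a_v$. Such $F$ is concave piecewise linear with integer slopes; its non-smooth points are the points of $(\alpha,\beta)$ where $F$ is not differentiable, and the multiplicity of such a point $h$ is $F'(h^-)-F'(h^+)\in\mathbb{Z}_{\ge1}$. For points $p_1,\dots,p_n$ in $(\alpha,\beta)$, the pointwise infimum of all $\Omega$-tropical series that are non-smooth at each $p_i$ is itself an $\Omega$-tropical series non-smooth at each $p_i$; it is denoted $F_\infty=G_{\{p_1,\dots,p_n\}}0_\Omega$. *)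

theory Defs
  imports "HOL-Analysis.Analysis"
begin

definition tropical_series :: "real \<Rightarrow> real \<Rightarrow> (real \<Rightarrow> real) \<Rightarrow> bool" where
  "tropical_series \<alpha> \<beta> F \<longleftrightarrow>
     \<alpha> \<le> \<beta> \<and> F \<alpha> = 0 \<and> F \<beta> = 0 \<and> (\<forall>z\<in>{\<alpha>..\<beta>}. F z \<ge> 0) \<and>
     (\<exists>a :: int \<Rightarrow> real. \<forall>z\<in>{\<alpha>..\<beta>}.
        (\<forall>v. F z \<le> a v + z * of_int v) \<and>
        (\<forall>y. (\<forall>v. y \<le> a v + z * of_int v) \<longrightarrow> y \<le> F z))"

definition nonsmooth_points :: "real \<Rightarrow> real \<Rightarrow> (real \<Rightarrow> real) \<Rightarrow> real set" where
  "nonsmooth_points \<alpha> \<beta> F = {h \<in> {\<alpha><..<\<beta>}. \<not> F differentiable (at h)}"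

definition left_deriv :: "(real \<Rightarrow> real) \<Rightarrow> real \<Rightarrow> real" where
  "left_deriv F h = (THE D. (F has_real_derivative D) (at_left h))"

definition right_deriv :: "(real \<Rightarrow> real) \<Rightarrow> real \<Rightarrow> real" where
  "right_deriv F h = (THE D. (F has_real_derivative D) (at_right h))"

definition multiplicity_at :: "(real \<Rightarrow> real) \<Rightarrow> real \<Rightarrow> real" where
  "multiplicity_at F h = left_deriv F h - right_deriv F h"

definition G_inf :: "real \<Rightarrow> real \<Rightarrow> real set \<Rightarrow> real \<Rightarrow> real" where
  "G_inf \<alpha> \<beta> P z =
     (if z \<in> {\<alpha>..\<beta>} then
        (INF G \<in> {G. tropical_series \<alpha> \<beta> G \<and> P \<subseteq> nonsmooth_points \<alpha> \<beta> G}. G z)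
      else 0)"

end

theory Submission
  imports Defs
begin


definition relu :: "real \<Rightarrow> real" where "relu z = max 0 z"

definition supg :: "(real \<Rightarrow> real) \<Rightarrow> real \<Rightarrow> real \<Rightarrow> bool" where
  "supg K x \<sigma> \<longleftrightarrow> (\<forall>y\<in>{0..1}. K y \<le> K x + \<sigma> * (y - x))"

definition kink :: "(real \<Rightarrow> real) \<Rightarrow> real \<Rightarrow> bool" where
  "kink K p \<longleftrightarrow> (\<exists>s1 s2::int. s1 \<ge> s2 + 1 \<and> supg K p (of_int s1) \<and> supg K p (of_int s2))"

lemma step_lt:
  assumes x: "supg K x \<sigma>" and p1: "supg K p s1" and p2: "supg K p s2"
    and s: "s1 \<ge> s2 + 1" and xp: "x < p" and "0 \<le> x" "p \<le> 1"
  shows "supg (\<lambda>y. K y + relu (y - p)) x \<sigma>"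
  unfolding supg_def
proof
  fix y :: real assume y: "y \<in> {0..1}"
  have "K x \<le> K p + s1 * (x - p)" using p1 assms by (auto simp: supg_def)
  moreover have "K p \<le> K x + \<sigma> * (p - x)" using x assms by (auto simp: supg_def)
  ultimately have "s1 * (p - x) \<le> \<sigma> * (p - x)" by (simp add: algebra_simps)
  hence s1s: "s1 \<le> \<sigma>" using xp by simp
  show "K y + relu (y - p) \<le> K x + relu (x - p) + \<sigma> * (y - x)"
  proof (cases "y \<le> p")
    case True
    then show ?thesis using x y xp by (auto simp: supg_def relu_def)
  next
    case False
    have "K y \<le> K p + s2 * (y - p)" using p2 y by (auto simp: supg_def)
    moreover have "(s2 + 1) * (y - p) \<le> \<sigma> * (y - p)"
      using False s s1s by (intro mult_right_mono) auto
    ultimately show ?thesis using \<open>K p \<le> K x + \<sigma> * (p - x)\<close> False xp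
      by (auto simp: relu_def algebra_simps)
  qed
qed

lemma step_gt:
  assumes x: "supg K x \<sigma>" and p1: "supg K p s1" and p2: "supg K p s2"
    and s: "s1 \<ge> s2 + 1" and xp: "p < x" and "0 \<le> p" "x \<le> 1"
  shows "supg (\<lambda>y. K y + relu (y - p)) x (\<sigma> + 1)"
  unfolding supg_def
proof
  fix y :: real assume y: "y \<in> {0..1}"
  have "K x \<le> K p + s2 * (x - p)" using p2 assms by (auto simp: supg_def)
  moreover have "K p \<le> K x + \<sigma> * (p - x)" using x assms by (auto simp: supg_def)
  ultimately have "\<sigma> * (x - p) \<le> s2 * (x - p)" by (simp add: algebra_simps)
  hence s2s: "\<sigma> \<le> s2" using xp by simp
  show "K y + relu (y - p) \<le> K x + relu (x - p) + (\<sigma> + 1) * (y - x)"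
  proof (cases "y \<le> p")
    case False
    then show ?thesis using x y xp by (auto simp: supg_def relu_def algebra_simps)
  next
    case True
    have "K y \<le> K p + s1 * (y - p)" using p1 y by (auto simp: supg_def)
    moreover have "s1 * (y - p) \<le> (\<sigma> + 1) * (y - p)"
      using True s s2s by (intro mult_right_mono_neg) auto
    ultimately show ?thesis using \<open>K p \<le> K x + \<sigma> * (p - x)\<close> True xp
      by (auto simp: relu_def algebra_simps)
  qed
qed

lemma step_eq:
  assumes p1: "supg K p s1" and p2: "supg K p s2" and s: "s1 \<ge> s2 + 1"
  shows "supg (\<lambda>y. K y + relu (y - p)) p (s2 + 1)"
  unfolding supg_def
proof
  fix y :: real assume y: "y \<in> {0..1}"
  show "K y + relu (y - p) \<le> K p + relu (p - p) + (s2 + 1) * (y - p)"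
  proof (cases "y \<le> p")
    case False
    then show ?thesis using p2 y by (auto simp: supg_def relu_def algebra_simps)
  next
    case True
    have "K y \<le> K p + s1 * (y - p)" using p1 y by (auto simp: supg_def)
    moreover have "s1 * (y - p) \<le> (s2 + 1) * (y - p)"
      using True s by (intro mult_right_mono_neg) auto
    ultimately show ?thesis using True by (auto simp: relu_def algebra_simps)
  qed
qed

lemma kink_step:
  assumes k: "kink K p'" and kp: "kink K p" and "p' \<noteq> p" and "p \<in> {0..1}" "p' \<in> {0..1}"
  shows "kink (\<lambda>y. K y + relu (y - p)) p'"
proof -
  obtain s1 s2 :: int where s: "s1 \<ge> s2 + 1" "supg K p s1" "supg K p s2" using kp by (auto simp: kink_def)
  obtain t1 t2 :: int where t: "t1 \<ge> t2 + 1" "supg K p' t1" "supg K p' t2" using k by (auto simp: kink_def)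
  have s': "real_of_int s1 \<ge> real_of_int s2 + 1" using s(1) by linarith
  show ?thesis
  proof (cases "p' < p")
    case True
    show ?thesis unfolding kink_def
      using step_lt[OF t(2) s(2,3) s' True] step_lt[OF t(3) s(2,3) s' True] t(1) assms
      by auto
  next
    case False
    hence pp: "p < p'" using assms by auto
    have "supg (\<lambda>y. K y + relu (y - p)) p' (of_int (t1 + 1))"
      using step_gt[OF t(2) s(2,3) s' pp] assms by auto
    moreover have "supg (\<lambda>y. K y + relu (y - p)) p' (of_int (t2 + 1))"
      using step_gt[OF t(3) s(2,3) s' pp] assms by auto
    ultimately show ?thesis unfolding kink_def using t(1)
      by (intro exI[of _ "t1+1"] exI[of _ "t2+1"]) auto
  qed
qed

lemma supg_step:
  assumes x: "supg K x (of_int \<sigma>)" and kp: "kink K p" and "p \<in> {0..1}" "x \<in> {0..1}"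
  shows "\<exists>\<tau>::int. supg (\<lambda>y. K y + relu (y - p)) x \<tau>"
proof -
  obtain s1 s2 :: int where s: "s1 \<ge> s2 + 1" "supg K p s1" "supg K p s2" using kp by (auto simp: kink_def)
  have s': "real_of_int s1 \<ge> real_of_int s2 + 1" using s(1) by linarith
  consider "x < p" | "x = p" | "p < x" by linarith
  then show ?thesis
  proof cases
    case 1 then show ?thesis using step_lt[OF x s(2,3) s' 1] assms by auto
  next
    case 2 then show ?thesis using step_eq[OF s(2,3) s'] by (intro exI[of _ "s2+1"]) auto
  next
    case 3 then show ?thesis using step_gt[OF x s(2,3) s' 3] assms by (intro exI[of _ "\<sigma>+1"]) auto
  qed
qed

lemma relu_induct:
  assumes fin: "finite A" and AA: "A \<subseteq> {0<..<1}"
    and base: "\<forall>x\<in>{0<..<1}. \<exists>\<sigma>::int. supg G x \<sigma>"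
    and kinks: "\<forall>p\<in>A. kink G p"
  shows "\<forall>x\<in>{0<..<1}. \<exists>\<sigma>::int. supg (\<lambda>y. G y + (\<Sum>p\<in>A. relu (y - p))) x \<sigma>"
proof -
  let ?K = "\<lambda>B y. G y + (\<Sum>p\<in>B. relu (y - p))"
  have "(\<forall>x\<in>{0<..<1}. \<exists>\<sigma>::int. supg (?K B) x \<sigma>) \<and> (\<forall>p\<in>A - B. kink (?K B) p)"
    if "B \<subseteq> A" for B
    using finite_subset[OF that fin] that
  proof (induction B rule: finite_subset_induct')
    case empty
    then show ?case using base kinks by simp
  next
    case (insert a F)
    have K: "?K (insert a F) = (\<lambda>y. ?K F y + relu (y - a))"
      using insert by (auto simp: sum.insert_remove algebra_simps)
    have a01: "a \<in> {0..1}" using insert AA by auto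
    have ka: "kink (?K F) a" using insert by auto
    show ?case unfolding K
    proof
      show "\<forall>x\<in>{0<..<1}. \<exists>\<tau>::int. supg (\<lambda>y. ?K F y + relu (y - a)) x \<tau>"
      proof
        fix x :: real assume x: "x \<in> {0<..<1}"
        then obtain \<sigma> :: int where "supg (?K F) x \<sigma>" using insert.IH x by blast
        then show "\<exists>\<tau>::int. supg (\<lambda>y. ?K F y + relu (y - a)) x \<tau>"
          using supg_step[OF _ ka a01] x by auto
      qed
      show "\<forall>p\<in>A - insert a F. kink (\<lambda>y. ?K F y + relu (y - a)) p"
      proof
        fix p assume p: "p \<in> A - insert a F"
        then have "kink (?K F) p" "p \<noteq> a" "p \<in> {0..1}" using insert AA by auto
        then show "kink (\<lambda>y. ?K F y + relu (y - a)) p"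
          using kink_step[OF _ ka _ a01] by auto
      qed
    qed
  qed
  from this[OF subset_refl] show ?thesis by blast
qed



lemma trop_repr:
  fixes a :: "int \<Rightarrow> real" and G :: "real \<Rightarrow> real" and \<eta> :: real
  assumes G0: "G 0 = 0" "G 1 = 0"
    and lb: "\<forall>z\<in>{0..1}. \<forall>v. G z \<le> a v + z * of_int v"
    and glb: "\<forall>z\<in>{0..1}. \<forall>y. (\<forall>v. y \<le> a v + z * of_int v) \<longrightarrow> y \<le> G z"
    and eta: "0 < \<eta>" "\<eta> \<le> 1/2"
  shows "\<exists>N::int. 0 \<le> N \<and> (\<forall>y\<in>{\<eta>..1-\<eta>}. G y = Min ((\<lambda>v. a v + y * of_int v) ` {-N..N}))"
proof -
  define N :: int where "N = \<lceil>a 0 / \<eta>\<rceil>"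
  have a0: "a v \<ge> 0" for v using lb[rule_format, of 0 v] G0 by simp
  have a1: "a v + of_int v \<ge> 0" for v using lb[rule_format, of 1 v] G0 by simp
  have Ga: "G y \<le> a 0" if "y \<in> {0..1}" for y using lb[rule_format, of y 0] that by simp
  have G0le: "0 \<le> a 0" using a0 by simp
  have Neta: "a 0 \<le> \<eta> * N" using eta unfolding N_def
    by (metis divide_le_eq_1_pos le_of_int_ceiling mult.commute pos_divide_le_eq)
  have big: "a v + y * of_int v > a 0" if "y \<in> {\<eta>..1-\<eta>}" "\<bar>v\<bar> > N" for y v
  proof -
    have "a v + y * of_int v \<ge> \<eta> * \<bar>of_int v\<bar>"
    proof (cases "v \<ge> 0")
      case True
      then have "\<eta> * of_int v \<le> y * of_int v" using that by (intro mult_right_mono) auto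
      then show ?thesis using a0[of v] True by simp
    next
      case False
      then have "\<eta> * (- of_int v) \<le> (1 - y) * (- of_int v)" using that by (intro mult_right_mono) auto
      then show ?thesis using a1[of v] False by (simp add: algebra_simps)
    qed
    moreover have "\<eta> * \<bar>of_int v\<bar> > \<eta> * N"
      using that eta by (intro mult_strict_left_mono) auto
    ultimately show ?thesis using Neta by linarith
  qed
  have "\<forall>y\<in>{\<eta>..1-\<eta>}. G y = Min ((\<lambda>v. a v + y * of_int v) ` {-N..N})"
  proof
    fix y assume y: "y \<in> {\<eta>..1-\<eta>}"
    hence y01: "y \<in> {0..1}" using eta by auto
    have N0: "0 \<le> N" proof -
      have "0 \<le> a 0 / \<eta>" using G0le eta by simp
      then show ?thesis unfolding N_def by simp
    qed
    let ?M = "Min ((\<lambda>v. a v + y * of_int v) ` {-N..N})"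
    have fin: "finite ((\<lambda>v. a v + y * of_int v) ` {-N..N})" by simp
    have ne: "(\<lambda>v. a v + y * of_int v) ` {-N..N} \<noteq> {}" using N0 by auto
    have "?M \<in> (\<lambda>v. a v + y * of_int v) ` {-N..N}" using Min_in[OF fin ne] .
    then have "G y \<le> ?M" using lb y01 by auto
    moreover have "?M \<le> a v + y * of_int v" for v
    proof (cases "v \<in> {-N..N}")
      case True then show ?thesis by (intro Min_le) auto
    next
      case False
      then have "\<bar>v\<bar> > N" by auto
      then have "a v + y * of_int v > a 0" using big y by auto
      moreover have "?M \<le> a 0 + y * of_int 0" using N0 by (intro Min_le) (auto intro!: image_eqI[of _ _ 0])
      ultimately show ?thesis by simp
    qed
    then have "?M \<le> G y" using glb y01 by blast
    ultimately show "G y = ?M" by simp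
  qed
  moreover have "0 \<le> N"
  proof -
    have "0 \<le> a 0 / \<eta>" using G0le eta by simp
    then show ?thesis unfolding N_def by simp
  qed
  ultimately show ?thesis by blast
qed

lemma trop_local:
  fixes a :: "int \<Rightarrow> real" and G :: "real \<Rightarrow> real"
  assumes G0: "G 0 = 0" "G 1 = 0"
    and lb: "\<forall>z\<in>{0..1}. \<forall>v. G z \<le> a v + z * of_int v"
    and glb: "\<forall>z\<in>{0..1}. \<forall>y. (\<forall>v. y \<le> a v + z * of_int v) \<longrightarrow> y \<le> G z"
    and x: "x \<in> {0<..<1}"
  shows "\<exists>v. a v + x * of_int v = G x"
    and "(\<forall>v w. a v + x * of_int v = G x \<longrightarrow> a w + x * of_int w = G x \<longrightarrow> v = w)
          \<Longrightarrow> G differentiable (at x)"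
proof -
  define \<eta> where "\<eta> = min x (1 - x) / 2"
  have eta: "0 < \<eta>" "\<eta> \<le> 1/2" "\<eta> < x" "x < 1 - \<eta>" using x unfolding \<eta>_def by (auto simp: min_def field_simps)
  obtain N :: int where N0: "0 \<le> N" and N: "\<forall>y\<in>{\<eta>..1-\<eta>}. G y = Min ((\<lambda>v. a v + y * of_int v) ` {-N..N})"
    using trop_repr[OF G0 lb glb eta(1,2)] by blast
  have att: "\<exists>v\<in>{-N..N}. G y = a v + y * of_int v" if "y \<in> {\<eta>..1-\<eta>}" for y
  proof -
    have ne: "{-N..N} \<noteq> {}" using N0 by auto
    have "Min ((\<lambda>v. a v + y * of_int v) ` {-N..N}) \<in> (\<lambda>v. a v + y * of_int v) ` {-N..N}"
      using ne by (intro Min_in) auto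
    then show ?thesis using N that by force
  qed
  show act: "\<exists>v. a v + x * of_int v = G x" using att[of x] eta by force
  assume uniq: "\<forall>v w. a v + x * of_int v = G x \<longrightarrow> a w + x * of_int w = G x \<longrightarrow> v = w"
  obtain s where s: "a s + x * of_int s = G x" using act by blast
  have gap: "a w + x * of_int w - (a s + x * of_int s) > 0" if "w \<noteq> s" for w
  proof -
    have "G x \<le> a w + x * of_int w" using lb x by auto
    moreover have "a w + x * of_int w \<noteq> G x" using uniq s that by blast
    ultimately show ?thesis using s by linarith
  qed
  have ev1: "\<forall>\<^sub>F y in nhds x. \<forall>w\<in>{-N..N} - {s}. a w + y * of_int w - (a s + y * of_int s) > 0"
  proof (rule eventually_ball_finite)
    show "\<forall>w\<in>{-N..N} - {s}. \<forall>\<^sub>F y in nhds x. a w + y * of_int w - (a s + y * of_int s) > 0"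
    proof
      fix w assume "w \<in> {-N..N} - {s}"
      then have "w \<noteq> s" by auto
      have "((\<lambda>y. a w + y * of_int w - (a s + y * of_int s)) \<longlongrightarrow> a w + x * of_int w - (a s + x * of_int s)) (nhds x)"
        by (intro tendsto_intros) (rule filterlim_ident)+
      from order_tendstoD(1)[OF this gap[OF \<open>w \<noteq> s\<close>]]
      show "\<forall>\<^sub>F y in nhds x. a w + y * of_int w - (a s + y * of_int s) > 0" .
    qed
  qed simp
  have ev2: "\<forall>\<^sub>F y in nhds x. y \<in> {\<eta><..<1-\<eta>}"
    using eta by (intro eventually_nhds_in_open) auto
  have ev: "\<forall>\<^sub>F y in nhds x. G y = a s + y * of_int s"
    using ev1 ev2
  proof eventually_elim
    case (elim y)
    then have y: "y \<in> {\<eta>..1-\<eta>}" by auto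
    then obtain v where v: "v \<in> {-N..N}" "G y = a v + y * of_int v" using att by blast
    have "G y \<le> a s + y * of_int s" using lb y eta by auto
    have "v = s"
    proof (rule ccontr)
      assume "v \<noteq> s"
      then have "0 < a v + y * of_int v - (a s + y * of_int s)" using elim v(1) by blast
      then show False using v(2) \<open>G y \<le> a s + y * of_int s\<close> by linarith
    qed
    then show ?case using v by simp
  qed
  have "((\<lambda>y. a s + y * of_int s) has_field_derivative of_int s) (at x)"
    by (auto intro!: derivative_eq_intros)
  then have "(G has_field_derivative of_int s) (at x)"
    using DERIV_cong_ev[OF refl ev refl] by simp
  then show "G differentiable (at x)"
    using differentiableI has_field_derivative_imp_has_derivative by blast
qed



lemma final_arith:
  fixes k x c q :: real and \<sigma> s0 :: int
  assumes h0: "0 \<le> k - \<sigma> * x" and h1: "s0 - c * (1 - q) \<le> k + \<sigma> * (1 - x)"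
    and c: "c = 0 \<or> (c = 1 \<and> 0 < q \<and> q < 1)" and x: "0 < x" "x < 1"
  shows "of_int s0 * x - c * relu (x - q) \<le> k"
proof (rule ccontr)
  assume neg: "\<not> ?thesis"
  show False
  proof (cases "c = 0 \<or> x \<le> q")
    case True
    then have r: "c * relu (x - q) = 0" by (auto simp: relu_def)
    with neg have "k < s0 * x" by simp
    with h0 have "\<sigma> * x < s0 * x" by simp
    then have "real_of_int \<sigma> < s0" using x by simp
    then have "\<sigma> \<le> s0 - 1" by linarith
    then have "real_of_int \<sigma> \<le> s0 - 1" by linarith
    then have "\<sigma> * (1 - x) \<le> (s0 - 1) * (1 - x)" using x by (intro mult_right_mono) auto
    then have "s0 - c * (1 - q) < s0 * x + (s0 - 1) * (1 - x)" using h1 \<open>k < s0 * x\<close> by linarith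
    then have "s0 - c * (1 - q) < s0 - 1 + x" by (simp add: algebra_simps)
    then show False using True c x by auto
  next
    case False
    then have cq: "c = 1" "q < x" "0 < q" using c by auto
    then have r: "c * relu (x - q) = x - q" by (auto simp: relu_def)
    with neg have kk: "k < (s0 - 1) * x + q" by (simp add: algebra_simps)
    with h1 cq have "(s0 - 1) * (1 - x) < \<sigma> * (1 - x)" by (simp add: algebra_simps)
    then have "real_of_int s0 - 1 < \<sigma>" using x by (simp add: mult_less_cancel_right)
    then have "s0 \<le> \<sigma>" by linarith
    then have "real_of_int s0 \<le> \<sigma>" by linarith
    then have "s0 * x \<le> \<sigma> * x" using x by (intro mult_right_mono) auto
    moreover have "k < s0 * x - x + q" using kk by (simp add: algebra_simps)
    ultimately show False using h0 cq by linarith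
  qed
qed

lemma active_supg:
  assumes lb: "\<forall>z\<in>{0..1}. \<forall>v. G z \<le> a v + z * of_int v" and act: "a v + x * of_int v = G x"
  shows "supg G x (of_int v)"
  unfolding supg_def
proof
  fix y :: real assume "y \<in> {0..1}"
  then have "G y \<le> a v + y * of_int v" using lb by auto
  also have "\<dots> = G x + of_int v * (y - x)" using act by (simp add: algebra_simps)
  finally show "G y \<le> G x + of_int v * (y - x)" .
qed

lemma lower_bound:
  fixes G :: "real \<Rightarrow> real" and P :: "real set" and s0 :: int and c q x :: real
  assumes trop: "tropical_series 0 1 G" and ns: "P \<subseteq> nonsmooth_points 0 1 G"
    and fin: "finite P" and P01: "P \<subseteq> {0<..<1}"
    and T: "(\<Sum>p\<in>P. 1 - p) = s0 - c * (1 - q)"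
    and c: "c = 0 \<or> (c = 1 \<and> 0 < q \<and> q < 1)" and x: "x \<in> {0..1}"
  shows "of_int s0 * x - c * relu (x - q) - (\<Sum>p\<in>P. relu (x - p)) \<le> G x"
proof -
  obtain a :: "int \<Rightarrow> real" where G0: "G 0 = 0" "G 1 = 0"
    and lb: "\<forall>z\<in>{0..1}. \<forall>v. G z \<le> a v + z * of_int v"
    and glb: "\<forall>z\<in>{0..1}. \<forall>y. (\<forall>v. y \<le> a v + z * of_int v) \<longrightarrow> y \<le> G z"
    using trop unfolding tropical_series_def by blast
  have base: "\<forall>x\<in>{0<..<1}. \<exists>\<sigma>::int. supg G x \<sigma>"
  proof
    fix x :: real assume x: "x \<in> {0<..<1}"
    obtain v where "a v + x * of_int v = G x" using trop_local(1)[OF G0 lb glb x] by blast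
    then show "\<exists>\<sigma>::int. supg G x \<sigma>" using active_supg[OF lb] by blast
  qed
  have kinks: "\<forall>p\<in>P. kink G p"
  proof
    fix p assume p: "p \<in> P"
    then have p01: "p \<in> {0<..<1}" and nd: "\<not> G differentiable (at p)"
      using ns P01 unfolding nonsmooth_points_def by auto
    then obtain v w where vw: "a v + p * of_int v = G p" "a w + p * of_int w = G p" "v \<noteq> w"
      using trop_local(2)[OF G0 lb glb p01] by blast
    show "kink G p"
    proof (cases "v < w")
      case True then show ?thesis using vw active_supg[OF lb]
        unfolding kink_def by (intro exI[of _ w] exI[of _ v]) auto
    next
      case False then show ?thesis using vw active_supg[OF lb]
        unfolding kink_def by (intro exI[of _ v] exI[of _ w]) auto
    qed
  qed
  define K where "K = (\<lambda>y. G y + (\<Sum>p\<in>P. relu (y - p)))"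
  have Ksup: "\<forall>x\<in>{0<..<1}. \<exists>\<sigma>::int. supg K x \<sigma>"
    using relu_induct[OF fin P01 base kinks] unfolding K_def .
  have r0: "(\<Sum>p\<in>P. relu (0 - p)) = 0" using P01 by (intro sum.neutral) (auto simp: relu_def)
  have r1: "(\<Sum>p\<in>P. relu (1 - p)) = (\<Sum>p\<in>P. 1 - p)" using P01 by (intro sum.cong) (auto simp: relu_def)
  have K0: "K 0 = 0" using G0 r0 unfolding K_def by simp
  have K1: "K 1 = s0 - c * (1 - q)" using G0 r1 T unfolding K_def by simp
  consider "x = 0" | "x = 1" | "x \<in> {0<..<1}" using x by fastforce
  then show ?thesis
  proof cases
    case 1 then show ?thesis using G0 r0 c by (auto simp: relu_def)
  next
    case 2 then show ?thesis using G0 r1 T c by (auto simp: relu_def)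
  next
    case 3
    then obtain \<sigma> :: int where sg: "supg K x \<sigma>" using Ksup by blast
    have h0: "0 \<le> K x - \<sigma> * x" using sg K0 unfolding supg_def by (metis atLeastAtMost_iff
          add_0_right diff_0 mult_minus_right order_refl zero_le_one diff_minus_eq_add minus_diff_eq
          diff_conv_add_uminus add_le_cancel_left)
    have h1: "s0 - c * (1 - q) \<le> K x + \<sigma> * (1 - x)" using sg[unfolded supg_def, rule_format, of 1] K1 by simp
    have "of_int s0 * x - c * relu (x - q) \<le> K x"
      using final_arith[OF h0 h1 c] 3 by auto
    then show ?thesis unfolding K_def by simp
  qed
qed



definition Fs :: "real set \<Rightarrow> int \<Rightarrow> bool \<Rightarrow> real \<Rightarrow> real \<Rightarrow> real" where
  "Fs P s0 cq q z = of_int s0 * z - (if cq then relu (z - q) else 0) - (\<Sum>p\<in>P. relu (z - p))"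

definition sigi :: "real set \<Rightarrow> int \<Rightarrow> bool \<Rightarrow> real \<Rightarrow> real \<Rightarrow> int" where
  "sigi P s0 cq q z = s0 - (if cq \<and> q \<le> z then 1 else 0) - int (card {p\<in>P. p \<le> z})"

lemma relu_sup: "relu (y - p) \<ge> relu (z - p) + (if p \<le> z then 1 else 0) * (y - z)"
  by (auto simp: relu_def)

lemma card_sum: "finite P \<Longrightarrow> (\<Sum>p\<in>P. (if p \<le> z then 1 else 0) * (w::real)) = real (card {p\<in>P. p \<le> z}) * w"
proof -
  assume f: "finite P"
  have "(\<Sum>p\<in>P. (if p \<le> z then 1 else 0) * w) = (\<Sum>p\<in>P. if p \<le> z then w else 0)"
    by (intro sum.cong) auto
  also have "\<dots> = (\<Sum>p\<in>{p\<in>P. p \<le> z}. w)" using sum.inter_filter[OF f, of "\<lambda>_. w"] by simp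
  finally show ?thesis by simp
qed

lemma Fs_supg:
  assumes "finite P"
  shows "Fs P s0 cq q y \<le> Fs P s0 cq q z + of_int (sigi P s0 cq q z) * (y - z)"
proof -
  have s: "(\<Sum>p\<in>P. relu (y - p)) \<ge> (\<Sum>p\<in>P. relu (z - p)) + real (card {p\<in>P. p \<le> z}) * (y - z)"
  proof -
    have "(\<Sum>p\<in>P. relu (y - p)) \<ge> (\<Sum>p\<in>P. relu (z - p) + (if p \<le> z then 1 else 0) * (y - z))"
      by (intro sum_mono relu_sup)
    then show ?thesis using card_sum[OF assms] by (simp add: sum.distrib)
  qed
  have c: "(if cq then relu (y - q) else 0) \<ge> (if cq then relu (z - q) else 0) + (if cq \<and> q \<le> z then 1 else 0) * (y - z)"
    using relu_sup[of z q y] by auto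
  show ?thesis using s c unfolding Fs_def sigi_def
    by (cases cq; cases "q \<le> z") (simp_all add: algebra_simps)
qed

lemma Fs_trop:
  assumes fin: "finite P" and P01: "P \<subseteq> {0<..<1}" and cq: "cq \<longrightarrow> 0 < q \<and> q < 1"
    and T: "(\<Sum>p\<in>P. 1 - p) = of_int s0 - (if cq then 1 - q else 0)"
  shows "tropical_series 0 1 (Fs P s0 cq q)"
proof -
  let ?F = "Fs P s0 cq q" and ?s = "sigi P s0 cq q"
  have r0: "(\<Sum>p\<in>P. relu (0 - p)) = 0" using P01 by (intro sum.neutral) (auto simp: relu_def)
  have r1: "(\<Sum>p\<in>P. relu (1 - p)) = (\<Sum>p\<in>P. 1 - p)" using P01 by (intro sum.cong) (auto simp: relu_def)
  have F0: "?F 0 = 0" using r0 cq unfolding Fs_def by (auto simp: relu_def)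
  have F1: "?F 1 = 0" using r1 cq T unfolding Fs_def by (auto simp: relu_def)
  have sup: "?F y \<le> ?F z + of_int (?s z) * (y - z)" for y z using Fs_supg[OF fin] .
  have nonneg: "?F y \<ge> 0" if "y \<in> {0..1}" for y
  proof (cases "?s y \<ge> 0")
    case True
    have "0 \<le> of_int (?s y) * y" using True that by auto
    then show ?thesis using sup[of 0 y] F0 by simp
  next
    case False
    have "0 \<le> - of_int (?s y) * (1 - y)" using False that by (intro mult_nonneg_nonneg) auto
    then show ?thesis using sup[of 1 y] F1 by (simp add: algebra_simps)
  qed
  define a :: "int \<Rightarrow> real" where "a v = (if \<exists>z\<in>{0..1}. ?s z = v
      then ?F (SOME z. z \<in> {0..1} \<and> ?s z = v) - (SOME z. z \<in> {0..1} \<and> ?s z = v) * of_int v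
      else \<bar>of_int (?s 0)\<bar> + \<bar>of_int v\<bar>)" for v
  have upper: "?F z \<le> a v + z * of_int v" if "z \<in> {0..1}" for z v
  proof (cases "\<exists>z\<in>{0..1}. ?s z = v")
    case True
    define z0 where "z0 = (SOME z. z \<in> {0..1} \<and> ?s z = v)"
    have z0: "z0 \<in> {0..1}" "?s z0 = v" using someI_ex[OF True[unfolded Bex_def]] unfolding z0_def by auto
    have "a v = ?F z0 - z0 * of_int v" using True unfolding a_def z0_def by simp
    then show ?thesis using sup[of z z0] z0 by (simp add: algebra_simps)
  next
    case False
    have "?F z \<le> of_int (?s 0) * z" using sup[of z 0] F0 by simp
    also have "\<dots> \<le> \<bar>of_int (?s 0)\<bar> * z" using that by (intro mult_right_mono) auto
    also have "\<dots> \<le> \<bar>of_int (?s 0)\<bar>" using that by (intro mult_left_le) auto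
    finally have "?F z \<le> \<bar>of_int (?s 0)\<bar>" .
    moreover have "- \<bar>of_int v\<bar> \<le> z * of_int v"
    proof -
      have "\<bar>z * of_int v\<bar> = z * \<bar>of_int v\<bar>" using that by (simp add: abs_mult)
      also have "\<dots> \<le> \<bar>of_int v\<bar>" using that by (intro mult_left_le_one_le) auto
      finally show ?thesis by linarith
    qed
    ultimately show ?thesis using False unfolding a_def by simp
  qed
  have attained: "a (?s z) + z * of_int (?s z) \<le> ?F z" if "z \<in> {0..1}" for z
  proof -
    have ex: "\<exists>z'\<in>{0..1}. ?s z' = ?s z" using that by blast
    define z0 where "z0 = (SOME z'. z' \<in> {0..1} \<and> ?s z' = ?s z)"
    have z0: "z0 \<in> {0..1}" "?s z0 = ?s z" using someI_ex[OF ex[unfolded Bex_def]] unfolding z0_def by auto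
    have "a (?s z) = ?F z0 - z0 * of_int (?s z)" using ex unfolding a_def z0_def by simp
    then show ?thesis using sup[of z0 z] by (simp add: algebra_simps)
  qed
  have key: "\<forall>z\<in>{0..1}. (\<forall>v. ?F z \<le> a v + z * of_int v) \<and>
      (\<forall>y. (\<forall>v. y \<le> a v + z * of_int v) \<longrightarrow> y \<le> ?F z)"
  proof (intro ballI conjI allI impI)
    fix z y assume "z \<in> {0..1::real}" "\<forall>v. y \<le> a v + z * of_int v"
    then show "y \<le> ?F z" using attained[of z] by (meson order_trans)
  qed (use upper in auto)
  show ?thesis unfolding tropical_series_def using F0 F1 nonneg key by (intro conjI exI[of _ a]) auto
qed



lemma relu_left: "((\<lambda>z. relu (z - p)) has_field_derivative (if p < h then 1 else 0)) (at_left h)"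
proof (cases "p < h")
  case True
  have ev: "\<forall>\<^sub>F z in at_left h. relu (z - p) = z - p"
    using eventually_at_left_real[OF True] by eventually_elim (auto simp: relu_def)
  have "((\<lambda>z. z - p) has_field_derivative 1) (at_left h)" by (auto intro!: derivative_eq_intros)
  then show ?thesis using has_field_derivative_cong_eventually[OF ev] True by (simp add: relu_def)
next
  case False
  have hh: "h - 1 < h" by simp
  have ev: "\<forall>\<^sub>F z in at_left h. relu (z - p) = 0"
    using eventually_at_left_real[of "h - 1" h, OF hh] by eventually_elim (use False in \<open>auto simp: relu_def\<close>)
  have "((\<lambda>z. 0) has_field_derivative 0) (at_left h)" by (auto intro!: derivative_eq_intros)
  then show ?thesis using has_field_derivative_cong_eventually[OF ev] False by (simp add: relu_def)
qed

lemma relu_right: "((\<lambda>z. relu (z - p)) has_field_derivative (if p \<le> h then 1 else 0)) (at_right h)"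
proof (cases "p \<le> h")
  case True
  have ev: "\<forall>\<^sub>F z in at_right h. relu (z - p) = z - p"
    using eventually_at_right_real[of h "h+1", OF less_add_one] by eventually_elim (use True in \<open>auto simp: relu_def\<close>)
  have "((\<lambda>z. z - p) has_field_derivative 1) (at_right h)" by (auto intro!: derivative_eq_intros)
  then show ?thesis using has_field_derivative_cong_eventually[OF ev] True by (simp add: relu_def)
next
  case False
  then have hp: "h < p" by simp
  have ev: "\<forall>\<^sub>F z in at_right h. relu (z - p) = 0"
    using eventually_at_right_real[OF hp] by eventually_elim (auto simp: relu_def)
  have "((\<lambda>z. 0) has_field_derivative 0) (at_right h)" by (auto intro!: derivative_eq_intros)
  then show ?thesis using has_field_derivative_cong_eventually[OF ev] False by (simp add: relu_def)
qed

lemma relu_at: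
  assumes "p \<noteq> h"
  shows "((\<lambda>z. relu (z - p)) has_field_derivative (if p < h then 1 else 0)) (at h)"
proof (cases "p < h")
  case True
  have ev: "\<forall>\<^sub>F z in nhds h. z - p = relu (z - p)"
    using eventually_nhds_in_open[of "{p<..}" h] True by (auto simp: relu_def elim!: eventually_mono)
  have "((\<lambda>z. z - p) has_field_derivative 1) (at h)" by (auto intro!: derivative_eq_intros)
  then show ?thesis using DERIV_cong_ev[OF refl ev refl] True by simp
next
  case False
  then have hp: "h < p" using assms by simp
  have ev: "\<forall>\<^sub>F z in nhds h. (0::real) = relu (z - p)"
    using eventually_nhds_in_open[of "{..<p}" h] hp by (auto simp: relu_def elim!: eventually_mono)
  have "((\<lambda>z. 0) has_field_derivative 0) (at h)" by (auto intro!: derivative_eq_intros)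
  then show ?thesis using DERIV_cong_ev[OF refl ev refl] False by simp
qed

definition lF :: "real set \<Rightarrow> int \<Rightarrow> bool \<Rightarrow> real \<Rightarrow> real \<Rightarrow> real" where
  "lF P s0 cq q h = of_int s0 - (if cq \<and> q < h then 1 else 0) - (\<Sum>p\<in>P. if p < h then 1 else 0)"

definition rF :: "real set \<Rightarrow> int \<Rightarrow> bool \<Rightarrow> real \<Rightarrow> real \<Rightarrow> real" where
  "rF P s0 cq q h = of_int s0 - (if cq \<and> q \<le> h then 1 else 0) - (\<Sum>p\<in>P. if p \<le> h then 1 else 0)"

lemma Fs_eq: "Fs P s0 cq q = (\<lambda>z. of_int s0 * z - (if cq then 1 else 0) * relu (z - q) - (\<Sum>p\<in>P. relu (z - p)))"
  unfolding Fs_def by (auto simp: fun_eq_iff)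

lemma Fs_left: "(Fs P s0 cq q has_field_derivative lF P s0 cq q h) (at_left h)"
proof -
  have "((\<lambda>z. of_int s0 * z - (if cq then 1 else 0) * relu (z - q) - (\<Sum>p\<in>P. relu (z - p)))
     has_field_derivative (of_int s0 * 1 - (if cq then 1 else 0) * (if q < h then 1 else 0)
        - (\<Sum>p\<in>P. if p < h then 1 else 0))) (at_left h)"
    by (intro DERIV_diff DERIV_cmult DERIV_sum DERIV_ident relu_left)
  then show ?thesis unfolding Fs_eq lF_def by (cases cq) auto
qed

lemma Fs_right: "(Fs P s0 cq q has_field_derivative rF P s0 cq q h) (at_right h)"
proof -
  have "((\<lambda>z. of_int s0 * z - (if cq then 1 else 0) * relu (z - q) - (\<Sum>p\<in>P. relu (z - p)))
     has_field_derivative (of_int s0 * 1 - (if cq then 1 else 0) * (if q \<le> h then 1 else 0)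
        - (\<Sum>p\<in>P. if p \<le> h then 1 else 0))) (at_right h)"
    by (intro DERIV_diff DERIV_cmult DERIV_sum DERIV_ident relu_right)
  then show ?thesis unfolding Fs_eq rF_def by (cases cq) auto
qed

lemma Fs_at:
  assumes "\<forall>p\<in>P. p \<noteq> h" "cq \<longrightarrow> q \<noteq> h"
  shows "(Fs P s0 cq q has_field_derivative lF P s0 cq q h) (at h)"
proof (cases cq)
  case True
  then have qh: "q \<noteq> h" using assms by auto
  have "((\<lambda>z. of_int s0 * z - (if cq then 1 else 0) * relu (z - q) - (\<Sum>p\<in>P. relu (z - p)))
     has_field_derivative (of_int s0 * 1 - (if cq then 1 else 0) * (if q < h then 1 else 0)
        - (\<Sum>p\<in>P. if p < h then 1 else 0))) (at h)"
    using assms qh by (intro DERIV_diff DERIV_cmult DERIV_sum DERIV_ident relu_at) auto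
  then show ?thesis unfolding Fs_eq lF_def using True by auto
next
  case False
  have "((\<lambda>z. of_int s0 * z - (\<Sum>p\<in>P. relu (z - p)))
     has_field_derivative (of_int s0 * 1 - (\<Sum>p\<in>P. if p < h then 1 else 0))) (at h)"
    using assms by (intro DERIV_diff DERIV_cmult DERIV_sum DERIV_ident relu_at) auto
  then show ?thesis unfolding Fs_def lF_def using False by auto
qed



lemma mult_formula:
  assumes "finite P"
  shows "lF P s0 cq q h - rF P s0 cq q h = (if h \<in> P then 1 else 0) + (if cq \<and> q = h then 1 else 0)"
proof -
  have "(\<Sum>p\<in>P. if p \<le> h then 1 else 0) - (\<Sum>p\<in>P. if p < h then 1 else 0)
      = (\<Sum>p\<in>P. (if p \<le> h then 1 else 0) - (if p < h then 1 else (0::real)))"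
    by (simp add: sum_subtractf)
  also have "\<dots> = (\<Sum>p\<in>P. if p = h then 1 else 0)" by (intro sum.cong) auto
  also have "\<dots> = (if h \<in> P then 1 else 0)" using assms by (simp add: sum.delta')
  finally show ?thesis unfolding lF_def rF_def by auto
qed

lemma H_props:
  assumes fin: "finite P" and eq: "\<forall>z\<in>{0..1}. H z = Fs P s0 cq q z" and h: "h \<in> {0<..<1}"
  shows "H differentiable (at h) \<longleftrightarrow> (h \<notin> P \<and> \<not> (cq \<and> q = h))"
    and "multiplicity_at H h = (if h \<in> P then 1 else 0) + (if cq \<and> q = h then 1 else 0)"
proof -
  have ev: "\<forall>\<^sub>F z in nhds h. Fs P s0 cq q z = H z"
    using eventually_nhds_in_open[of "{0<..<1}" h] h eq by (auto elim!: eventually_mono)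
  have Hh: "Fs P s0 cq q h = H h" using eq h by auto
  have evw: "\<forall>\<^sub>F z in at h within S. Fs P s0 cq q z = H z" for S
    using ev unfolding eventually_at_filter by (auto elim!: eventually_mono)
  have HL: "(H has_field_derivative lF P s0 cq q h) (at_left h)"
    using Fs_left has_field_derivative_cong_eventually[OF evw Hh] by blast
  have HR: "(H has_field_derivative rF P s0 cq q h) (at_right h)"
    using Fs_right has_field_derivative_cong_eventually[OF evw Hh] by blast
  have nbL: "at_left h \<noteq> bot" using trivial_limit_at_left_real[of h] unfolding trivial_limit_def by simp
  have nbR: "at_right h \<noteq> bot" using trivial_limit_at_right_real[of h] unfolding trivial_limit_def by simp
  have L: "left_deriv H h = lF P s0 cq q h" unfolding left_deriv_def
    using HL has_field_derivative_unique[OF _ HL nbL] by blast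
  have R: "right_deriv H h = rF P s0 cq q h" unfolding right_deriv_def
    using HR has_field_derivative_unique[OF _ HR nbR] by blast
  show "multiplicity_at H h = (if h \<in> P then 1 else 0) + (if cq \<and> q = h then 1 else 0)"
    unfolding multiplicity_at_def L R using mult_formula[OF fin] .
  show "H differentiable (at h) \<longleftrightarrow> (h \<notin> P \<and> \<not> (cq \<and> q = h))"
  proof
    assume "H differentiable (at h)"
    then obtain D where D: "(H has_field_derivative D) (at h)"
      using real_differentiable_def[of H h UNIV] by auto
    have "D = lF P s0 cq q h" using has_field_derivative_unique[OF has_field_derivative_at_within[OF D] HL nbL] .
    moreover have "D = rF P s0 cq q h" using has_field_derivative_unique[OF has_field_derivative_at_within[OF D] HR nbR] .
    ultimately have "lF P s0 cq q h - rF P s0 cq q h = 0" by simp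
    then show "h \<notin> P \<and> \<not> (cq \<and> q = h)" using mult_formula[OF fin, of s0 cq q h]
      by (auto split: if_splits)
  next
    assume c: "h \<notin> P \<and> \<not> (cq \<and> q = h)"
    then have "\<forall>p\<in>P. p \<noteq> h" "cq \<longrightarrow> q \<noteq> h" by auto
    from Fs_at[OF this, of s0] have "(H has_field_derivative lF P s0 cq q h) (at h)"
      using DERIV_cong_ev[OF refl ev refl] by blast
    then show "H differentiable (at h)"
      using real_differentiable_def[of H h UNIV] by auto
  qed
qed



theorem mainTheorem5:
  fixes P :: "real set" and q :: real
  assumes "finite P" and "P \<subseteq> {0<..<1}"
    and "q = frac (- (\<Sum>p\<in>P. p))"
  shows "(q = 0 \<longrightarrow>
           nonsmooth_points 0 1 (G_inf 0 1 P) = P \<and>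
           (\<forall>h\<in>P. multiplicity_at (G_inf 0 1 P) h = 1))
       \<and> (q \<in> P \<longrightarrow>
           nonsmooth_points 0 1 (G_inf 0 1 P) = P \<and>
           multiplicity_at (G_inf 0 1 P) q = 2 \<and>
           (\<forall>h\<in>P - {q}. multiplicity_at (G_inf 0 1 P) h = 1))
       \<and> (q \<noteq> 0 \<and> q \<notin> P \<longrightarrow>
           nonsmooth_points 0 1 (G_inf 0 1 P) = insert q P \<and>
           (\<forall>h\<in>insert q P. multiplicity_at (G_inf 0 1 P) h = 1))"
proof -
  note fin = assms(1) and P01 = assms(2)
  define S where "S = (\<Sum>p\<in>P. p)"
  define cq where "cq = (q \<noteq> 0)"
  define s0 :: int where "s0 = int (card P) + \<lfloor>- S\<rfloor> + (if cq then 1 else 0)"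
  have q01: "0 \<le> q" "q < 1" using assms(3) by (auto simp: frac_ge_0 frac_lt_1)
  have qS: "q = - S - of_int \<lfloor>- S\<rfloor>" using assms(3) unfolding S_def frac_def by simp
  have cqq: "cq \<longrightarrow> 0 < q \<and> q < 1" using q01 unfolding cq_def by auto
  have T: "(\<Sum>p\<in>P. 1 - p) = of_int s0 - (if cq then 1 - q else 0)"
  proof -
    have "(\<Sum>p\<in>P. 1 - p) = real (card P) - S" unfolding S_def by (simp add: sum_subtractf)
    then show ?thesis unfolding s0_def using qS unfolding cq_def by auto
  qed
  let ?F = "Fs P s0 cq q"
  let ?A = "{G. tropical_series 0 1 G \<and> P \<subseteq> nonsmooth_points 0 1 G}"
  have Ftrop: "tropical_series 0 1 ?F" using Fs_trop[OF fin P01 cqq T] .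
  have Fns: "P \<subseteq> nonsmooth_points 0 1 ?F"
  proof
    fix p assume p: "p \<in> P"
    then have p01: "p \<in> {0<..<1}" using P01 by auto
    have "\<not> ?F differentiable (at p)" using H_props(1)[OF fin _ p01, of ?F] p by auto
    then show "p \<in> nonsmooth_points 0 1 ?F" using p01 unfolding nonsmooth_points_def by auto
  qed
  have FA: "?F \<in> ?A" using Ftrop Fns by simp
  have low: "?F z \<le> G z" if "G \<in> ?A" "z \<in> {0..1}" for G z
  proof -
    have c: "(if cq then 1 else 0) = (0::real) \<or> ((if cq then 1 else 0) = (1::real) \<and> 0 < q \<and> q < 1)"
      using cqq by auto
    have "of_int s0 * z - (if cq then 1 else 0) * relu (z - q) - (\<Sum>p\<in>P. relu (z - p)) \<le> G z"
      using lower_bound[of G P s0 "if cq then 1 else 0" q z] that fin P01 T c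
      by (auto simp: if_distrib)
    then show ?thesis unfolding Fs_eq by simp
  qed
  have eq: "\<forall>z\<in>{0..1}. G_inf 0 1 P z = ?F z"
  proof
    fix z :: real assume z: "z \<in> {0..1}"
    have "(INF G \<in> ?A. G z) = ?F z"
    proof (rule antisym)
      show "(INF G \<in> ?A. G z) \<le> ?F z"
        by (rule cINF_lower[OF _ FA]) (auto intro!: bdd_belowI[of _ "?F z"] low z)
      show "?F z \<le> (INF G \<in> ?A. G z)"
        using FA by (intro cINF_greatest) (auto intro!: low z)
    qed
    then show "G_inf 0 1 P z = ?F z" using z unfolding G_inf_def by simp
  qed
  let ?H = "G_inf 0 1 P"
  have ns: "nonsmooth_points 0 1 ?H = P \<union> (if cq then {q} else {})"
  proof -
    have "nonsmooth_points 0 1 ?H = {h \<in> {0<..<1}. h \<in> P \<or> (cq \<and> q = h)}"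
      unfolding nonsmooth_points_def using H_props(1)[OF fin eq] by auto
    also have "\<dots> = P \<union> (if cq then {q} else {})" using P01 cqq by auto
    finally show ?thesis .
  qed
  have mult: "multiplicity_at ?H h = (if h \<in> P then 1 else 0) + (if cq \<and> q = h then 1 else 0)"
    if "h \<in> {0<..<1}" for h using H_props(2)[OF fin eq that] .
  have q0P: "q \<in> P \<Longrightarrow> cq" using P01 unfolding cq_def by auto
  show ?thesis
  proof (intro conjI impI)
    assume "q = 0"
    then have ncq: "\<not> cq" unfolding cq_def by simp
    show "nonsmooth_points 0 1 ?H = P" using ns ncq by simp
    show "\<forall>h\<in>P. multiplicity_at ?H h = 1" using mult ncq P01 by auto
  next
    assume qP: "q \<in> P"
    then have cq: cq using q0P by blast
    show "nonsmooth_points 0 1 ?H = P" using ns cq qP by auto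
    show "multiplicity_at ?H q = 2" using mult[of q] cq qP P01 by auto
    show "\<forall>h\<in>P - {q}. multiplicity_at ?H h = 1"
    proof
      fix h assume h: "h \<in> P - {q}"
      then have "h \<in> {0<..<1}" using P01 by auto
      then show "multiplicity_at ?H h = 1" using mult[of h] h by auto
    qed
  next
    assume qq: "q \<noteq> 0 \<and> q \<notin> P"
    then have cq: cq unfolding cq_def by simp
    show "nonsmooth_points 0 1 ?H = insert q P" using ns cq by auto
    show "\<forall>h\<in>insert q P. multiplicity_at ?H h = 1" using mult cq qq P01 cqq by auto
  qed
qed

end
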